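(* Let $S=\{1,\dots,k\}$ with $k\ge3$ and $c\in\mathbb{R}_+$. Both $\rho_c$ and $\overline\rho_c$ are t-monotone submodular functions on $2^{S^\pm}$, and $B_c=\mathcal{B}(\rho_c)$, $\overline B_c=\mathcal{B}(\overline\rho_c)$.
   Context: $S^\pm=S\times\{\pm1\}$, $i^\pm=(i,\pm1)$, $S^\pm\supseteq S^+=\{i^+\}$, $S^-=\{i^-\}$. For $X\subseteq S^\pm$ write $X^+=X\cap S^+$, $X^-=X\cap S^-$, and let $\underline X$ be obtained from $X$ by removing every pair $\{i^+,i^-\}\subseteq X$. A function $\rho$ on $2^{S^\pm}$ with $\rho(\emptyset)=0$ is submodular if $\rho(X)+\rho(Y)\ge\rho(X\cap Y)+\rho(X\cup Y)$, t-monotone if $\rho(\underline X)\le\rho(X)$ for all $X$; $\mathcal{B}(\rho)=\{x\in\mathbb{R}^{S^\pm}:x(S^\pm)=\rho(S^\pm),\ x(X)\le\rho(X)\ \forall X\}$. Types: for $u,v\in\{0,1,2\}$, $X$ is of type $uv$ if $|X^+|=u$ when $u\in\{0,1\}$ and $|X^+|\ge2$ when $u=2$, and $|X^-|=k-v$ when $v\in\{0,1\}$ and $|X^-|\le k-2$ when $v=2$. $X$ is of type $11^*$ if $X^+=\{i^+\}$ and $X^-=S^-\setminus\{i^-\}$ for some $i\in S$; "type 11" means type 11 but not type $11^*$. Define $\rho_c(X)=2c$ if $X$ is of type 22, $\rho_c(X)=c$ if $X$ is of type 11, 12 or 21, and $\rho_c(X)=0$ otherwise; and $\overline\rho_c(X)=c\,(\min\{|X^+|,2\}+\min\{k-2-|X^-|,0\})$.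 $B_c$ is the set of $x\in\mathbb{R}^{S^\pm}$ with $x(S^\pm)=0$, $x(S^+)\le 2c$, $x(i^+)+x(S^-\setminus\{i^-\})\le0$ ($i\in S$), $0\le x(i^+)\le c$ and $-c\le x(i^-)\le0$ ($i\in S$); $\overline B_c$ consists of $x\in B_c$ with additionally $x(S^-)\le-2c$. *)

theory Defs
  imports Complex_Main
begin

text \<open>Elements of S^pm are pairs (i, b) with i in S = {1..k}; b = True encodes i^+,
  b = False encodes i^-.\<close>

definition Spm :: "nat \<Rightarrow> (nat \<times> bool) set" where
  "Spm k = {1..k} \<times> UNIV"

definition Sp :: "nat \<Rightarrow> (nat \<times> bool) set" where
  "Sp k = {1..k} \<times> {True}"

definition Sm :: "nat \<Rightarrow> (nat \<times> bool) set" where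
  "Sm k = {1..k} \<times> {False}"

definition posp :: "(nat \<times> bool) set \<Rightarrow> (nat \<times> bool) set" where
  "posp X = {p \<in> X. snd p}"

definition negp :: "(nat \<times> bool) set \<Rightarrow> (nat \<times> bool) set" where
  "negp X = {p \<in> X. \<not> snd p}"

definition tred :: "(nat \<times> bool) set \<Rightarrow> (nat \<times> bool) set" where
  "tred X = {p \<in> X. (fst p, \<not> snd p) \<notin> X}"

definition submodular_on :: "nat \<Rightarrow> ((nat \<times> bool) set \<Rightarrow> real) \<Rightarrow> bool" where
  "submodular_on k \<rho> \<longleftrightarrow> \<rho> {} = 0 \<and>
     (\<forall>X Y. X \<subseteq> Spm k \<longrightarrow> Y \<subseteq> Spm k \<longrightarrow> \<rho> X + \<rho> Y \<ge> \<rho> (X \<inter> Y) + \<rho> (X \<union> Y))"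

definition tmonotone_on :: "nat \<Rightarrow> ((nat \<times> bool) set \<Rightarrow> real) \<Rightarrow> bool" where
  "tmonotone_on k \<rho> \<longleftrightarrow> (\<forall>X. X \<subseteq> Spm k \<longrightarrow> \<rho> (tred X) \<le> \<rho> X)"

text \<open>Vectors in R^{S^pm}: real functions vanishing outside S^pm.\<close>
definition Bpoly :: "nat \<Rightarrow> ((nat \<times> bool) set \<Rightarrow> real) \<Rightarrow> ((nat \<times> bool) \<Rightarrow> real) set" where
  "Bpoly k \<rho> = {x. (\<forall>p. p \<notin> Spm k \<longrightarrow> x p = 0) \<and> sum x (Spm k) = \<rho> (Spm k) \<and>
                    (\<forall>X. X \<subseteq> Spm k \<longrightarrow> sum x X \<le> \<rho> X)}"

definition has_type :: "nat \<Rightarrow> nat \<Rightarrow> nat \<Rightarrow> (nat \<times> bool) set \<Rightarrow> bool" where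
  "has_type k u v X \<longleftrightarrow>
     (if u \<le> 1 then card (posp X) = u else card (posp X) \<ge> 2) \<and>
     (if v \<le> 1 then card (negp X) = k - v else card (negp X) \<le> k - 2)"

definition type11star :: "nat \<Rightarrow> (nat \<times> bool) set \<Rightarrow> bool" where
  "type11star k X \<longleftrightarrow> (\<exists>i\<in>{1..k}. posp X = {(i, True)} \<and> negp X = Sm k - {(i, False)})"

definition rho_c :: "nat \<Rightarrow> real \<Rightarrow> (nat \<times> bool) set \<Rightarrow> real" where
  "rho_c k c X =
     (if has_type k 2 2 X then 2 * c
      else if (has_type k 1 1 X \<and> \<not> type11star k X) \<or> has_type k 1 2 X \<or> has_type k 2 1 X then c
      else 0)"

definition rhobar_c :: "nat \<Rightarrow> real \<Rightarrow> (nat \<times> bool) set \<Rightarrow> real" where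
  "rhobar_c k c X = c * (min (real (card (posp X))) 2 + min (real k - 2 - real (card (negp X))) 0)"

definition B_c :: "nat \<Rightarrow> real \<Rightarrow> ((nat \<times> bool) \<Rightarrow> real) set" where
  "B_c k c = {x. (\<forall>p. p \<notin> Spm k \<longrightarrow> x p = 0) \<and> sum x (Spm k) = 0 \<and> sum x (Sp k) \<le> 2 * c \<and>
               (\<forall>i\<in>{1..k}. x (i, True) + sum x (Sm k - {(i, False)}) \<le> 0) \<and>
               (\<forall>i\<in>{1..k}. 0 \<le> x (i, True) \<and> x (i, True) \<le> c) \<and>
               (\<forall>i\<in>{1..k}. - c \<le> x (i, False) \<and> x (i, False) \<le> 0)}"

definition Bbar_c :: "nat \<Rightarrow> real \<Rightarrow> ((nat \<times> bool) \<Rightarrow> real) set" where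
  "Bbar_c k c = {x \<in> B_c k c. sum x (Sm k) \<le> - 2 * c}"

end

theory Submission imports Defs begin

lemma fin_Spm: "finite (Spm k)" by (simp add: Spm_def)
lemma Sp_Sm: "Spm k = Sp k \<union> Sm k" "Sp k \<inter> Sm k = {}"
  by (auto simp: Spm_def Sp_def Sm_def)
lemma card_Sp: "card (Sp k) = k"
proof -
  have "Sp k = (\<lambda>i. (i, True)) ` {1..k}" by (auto simp: Sp_def)
  moreover have "inj_on (\<lambda>i. (i, True)) {1..k}" by (auto simp: inj_on_def)
  ultimately show ?thesis by (simp add: card_image)
qed
lemma card_Sm: "card (Sm k) = k"
proof -
  have "Sm k = (\<lambda>i. (i, False)) ` {1..k}" by (auto simp: Sm_def)
  moreover have "inj_on (\<lambda>i. (i, False)) {1..k}" by (auto simp: inj_on_def)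
  ultimately show ?thesis by (simp add: card_image)
qed
lemma fin_Sp: "finite (Sp k)" and fin_Sm: "finite (Sm k)" by (auto simp: Sp_def Sm_def)

lemma posp_sub: "X \<subseteq> Spm k \<Longrightarrow> posp X \<subseteq> Sp k"
  by (auto simp: posp_def Spm_def Sp_def)
lemma negp_sub: "X \<subseteq> Spm k \<Longrightarrow> negp X \<subseteq> Sm k"
  by (auto simp: negp_def Spm_def Sm_def)
lemma card_negp_le: "X \<subseteq> Spm k \<Longrightarrow> card (negp X) \<le> k"
  by (metis card_Sm card_mono fin_Sm negp_sub)
lemma card_posp_le: "X \<subseteq> Spm k \<Longrightarrow> card (posp X) \<le> k"
  by (metis card_Sp card_mono fin_Sp posp_sub)
lemma fin_posp: "X \<subseteq> Spm k \<Longrightarrow> finite (posp X)"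
  by (meson fin_Sp finite_subset posp_sub)
lemma fin_negp: "X \<subseteq> Spm k \<Longrightarrow> finite (negp X)"
  by (meson fin_Sm finite_subset negp_sub)

lemma posp_Int: "posp (X \<inter> Y) = posp X \<inter> posp Y" and posp_Un: "posp (X \<union> Y) = posp X \<union> posp Y"
  and negp_Int: "negp (X \<inter> Y) = negp X \<inter> negp Y" and negp_Un: "negp (X \<union> Y) = negp X \<union> negp Y"
  by (auto simp: posp_def negp_def)

lemma X_split: "X = posp X \<union> negp X" "posp X \<inter> negp X = {}"
  by (auto simp: posp_def negp_def)

lemma card_Sm_minus: "i \<in> {1..k} \<Longrightarrow> card (Sm k - {(i, False)}) = k - 1"
  by (simp add: card_Sm Sm_def)

lemma star_card: assumes "type11star k X"
  shows "card (posp X) = 1" "card (negp X) = k - 1"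
  using assms card_Sm_minus by (auto simp: type11star_def)

lemma star_k: "type11star k X \<Longrightarrow> k \<ge> 1"
  by (auto simp: type11star_def)

definition gg :: "nat \<Rightarrow> (nat \<times> bool) set \<Rightarrow> int" where
  "gg k X = int (min (card (posp X)) (min (k - card (negp X)) 2)) - (if type11star k X then 1 else 0)"

lemma rho_c_gg: assumes "X \<subseteq> Spm k" "k \<ge> 3"
  shows "rho_c k c X = c * of_int (gg k X)"
proof (cases "type11star k X")
  case True
  then show ?thesis using star_card[OF True] assms
    by (auto simp: rho_c_def has_type_def gg_def)
next
  case False
  have "card (negp X) \<le> k" using card_negp_le assms(1) .
  then show ?thesis using False assms
    by (auto simp: rho_c_def has_type_def gg_def min_def)
qed


lemma F_subi:
  fixes pI pU pX pY qI qU qX qY :: int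
  assumes "pI + pU = pX + pY" "pI \<le> pX" "pI \<le> pY" "qI + qU = qX + qY" "qU \<le> qX" "qU \<le> qY" "qU \<ge> 0" "pI \<ge> 0"
  shows "min pI (min qI 2) + min pU (min qU 2) \<le> min pX (min qX 2) + min pY (min qY 2)"
  using assms unfolding min_def by (smt (verit))
lemma int_minF: "n \<le> k \<Longrightarrow> int (min a (min (k - n) 2)) = min (int a) (min (int k - int n) 2)"
  by (auto simp: min_def of_nat_diff)
lemma F_sub:
  fixes pI pU pX pY nI nU nX nY k :: nat
  assumes "pI + pU = pX + pY" "pI \<le> pX" "pI \<le> pY" "nI + nU = nX + nY" "nI \<le> nX" "nI \<le> nY" "nU \<le> k"
  shows "min pI (min (k - nI) 2) + min pU (min (k - nU) 2) \<le> min pX (min (k - nX) 2) + min pY (min (k - nY) 2)"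
proof -
  have "min (int pI) (min (int k - int nI) 2) + min (int pU) (min (int k - int nU) 2) \<le> min (int pX) (min (int k - int nX) 2) + min (int pY) (min (int k - int nY) 2)"
    by (rule F_subi) (use assms in auto)
  moreover have "nX \<le> k" "nY \<le> k" "nI \<le> k" using assms by auto
  ultimately have "int (min pI (min (k - nI) 2) + min pU (min (k - nU) 2)) \<le> int (min pX (min (k - nX) 2) + min pY (min (k - nY) 2))"
    using assms(7) by (simp only: of_nat_add int_minF)
  then show ?thesis by linarith
qed

lemma gg_cong: "posp Z = posp W \<Longrightarrow> negp Z = negp W \<Longrightarrow> gg k Z = gg k W"
  by (simp add: gg_def type11star_def)
lemma gg_p0: "card (posp Z) = 0 \<Longrightarrow> gg k Z = 0"
  using star_card(1) by (fastforce simp: gg_def)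
lemma gg_q0: "k \<ge> 1 \<Longrightarrow> card (negp Z) = k \<Longrightarrow> gg k Z = 0"
  using star_card(2)[of k Z] by (auto simp: gg_def)
lemma gg_le: "gg k Z \<le> int (min (card (posp Z)) (min (k - card (negp Z)) 2))"
  by (simp add: gg_def)
lemma gg_nonneg: "gg k Z \<ge> 0"
  using star_card[of k Z] star_k[of k Z] by (auto simp: gg_def)
lemma gg_ge1: "\<not> type11star k Z \<Longrightarrow> card (posp Z) \<ge> 1 \<Longrightarrow> card (negp Z) < k \<Longrightarrow> gg k Z \<ge> 1"
  by (simp add: gg_def)
lemma gg_2: "card (posp Z) \<ge> 2 \<Longrightarrow> card (negp Z) + 2 \<le> k \<Longrightarrow> gg k Z = 2"
  using star_card(1)[of k Z] by (auto simp: gg_def)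
lemma gg_eq: "\<not> type11star k Z \<Longrightarrow> gg k Z = int (min (card (posp Z)) (min (k - card (negp Z)) 2))"
  by (simp add: gg_def)

lemma mem_posp: "p \<in> posp X \<longleftrightarrow> p \<in> X \<and> snd p" by (simp add: posp_def)
lemma mem_negp: "p \<in> negp X \<longleftrightarrow> p \<in> X \<and> \<not> snd p" by (simp add: negp_def)

lemma card2: assumes "finite A" "a \<in> A" "A \<noteq> {a}" shows "card A \<ge> 2"
proof -
  obtain b where b: "b \<in> A" "b \<noteq> a" using assms by blast
  have "card {a, b} \<le> card A" using assms b by (intro card_mono) auto
  then show ?thesis using b by simp
qed

lemma star_case:
  assumes k: "k \<ge> 3" and X: "X \<subseteq> Spm k" and Y: "Y \<subseteq> Spm k" and st: "type11star k X"
  shows "gg k (X \<inter> Y) + gg k (X \<union> Y) \<le> gg k Y"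
proof -
  obtain i where i: "i \<in> {1..k}" and pX: "posp X = {(i, True)}" and nX: "negp X = Sm k - {(i, False)}"
    using st by (auto simp: type11star_def)
  have ggX: "gg k X = 0" using st star_card[OF st] star_k[OF st] by (simp add: gg_def)
  have iF: "(i, False) \<in> Sm k" "(i, True) \<in> Sp k" using i by (auto simp: Sm_def Sp_def)
  have cnX: "card (negp X) = k - 1" using nX card_Sm_minus[OF i] by simp
  have nY: "negp Y \<subseteq> Sm k" using negp_sub[OF Y] .
  have fnY: "finite (negp Y)" using fin_negp[OF Y] .
  have fpY: "finite (posp Y)" using fin_posp[OF Y] .
  have cnY: "card (negp Y) \<le> k" using card_negp_le[OF Y] .
  have fI: "finite (posp (X \<inter> Y))" "finite (negp (X \<inter> Y))" using X by (auto intro: fin_posp fin_negp)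
  have fU: "finite (posp (X \<union> Y))" "finite (negp (X \<union> Y))" using X Y
    by (auto intro!: fin_posp fin_negp)
  show ?thesis
  proof (cases "(i, True) \<in> Y")
    case iT: True
    have mT: "(i, True) \<in> posp Y" using iT by (simp add: mem_posp)
    show ?thesis
    proof (cases "(i, False) \<in> Y")
      case iFY: True
      have mF: "(i, False) \<in> negp Y" using iFY by (simp add: mem_negp)
      have "negp (X \<union> Y) = Sm k" using nX nY mF iF by (auto simp: negp_Un)
      then have gU: "gg k (X \<union> Y) = 0" using k card_Sm by (intro gg_q0) auto
      have "posp (X \<inter> Y) \<subseteq> {(i, True)}" using pX by (auto simp: posp_Int)
      then have "card (posp (X \<inter> Y)) \<le> card {(i, True)}" by (intro card_mono) auto
      then have "card (posp (X \<inter> Y)) \<le> 1" by simp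
      then have gI: "gg k (X \<inter> Y) \<le> 1" using gg_le[of k "X \<inter> Y"] by linarith
      have nsY: "\<not> type11star k Y"
      proof
        assume "type11star k Y"
        then obtain j where "posp Y = {(j, True)}" "negp Y = Sm k - {(j, False)}"
          by (auto simp: type11star_def)
        then show False using mT mF by auto
      qed
      show ?thesis
      proof (cases "card (negp Y) = k")
        case True
        then have "negp Y = Sm k" using nY card_Sm fin_Sm by (metis card_subset_eq)
        then have "gg k (X \<inter> Y) = gg k X" using pX nX mT
          by (intro gg_cong) (auto simp: posp_Int negp_Int)
        then show ?thesis using gU ggX gg_nonneg[of k Y] by simp
      next
        case False
        have "card (posp Y) \<ge> 1" using mT fpY by (auto simp: Suc_le_eq card_gt_0_iff)
        then have "gg k Y \<ge> 1" using nsY False cnY by (intro gg_ge1) auto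
        then show ?thesis using gU gI by simp
      qed
    next
      case iFY: False
      have "(i, False) \<notin> negp Y" using iFY by (simp add: mem_negp)
      then have nYX: "negp Y \<subseteq> negp X" using nY nX by auto
      have nU: "negp (X \<union> Y) = negp X" using nYX by (auto simp: negp_Un)
      have pU: "posp (X \<union> Y) = posp Y" using pX mT by (auto simp: posp_Un)
      have pI: "posp (X \<inter> Y) = {(i, True)}" using pX mT by (auto simp: posp_Int)
      have nI: "negp (X \<inter> Y) = negp Y" using nYX by (auto simp: negp_Int)
      have gI: "gg k (X \<inter> Y) \<le> 1" using gg_le[of k "X \<inter> Y"] pI by simp
      have gU: "gg k (X \<union> Y) \<le> 1" using gg_le[of k "X \<union> Y"] nU cnX k by simp
      have cpY1: "card (posp Y) \<ge> 1" using mT fpY by (auto simp: Suc_le_eq card_gt_0_iff)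
      show ?thesis
      proof (cases "negp Y = negp X")
        case nE: True
        have gI0: "gg k (X \<inter> Y) = 0" using pI nI nE pX ggX gg_cong[of "X \<inter> Y" X k] by simp
        show ?thesis
        proof (cases "posp Y = {(i, True)}")
          case True
          have "gg k (X \<union> Y) = 0" using pU nU True pX ggX gg_cong[of "X \<union> Y" X k] by simp
          then show ?thesis using gI0 gg_nonneg[of k Y] by simp
        next
          case False
          have "(i, True) \<in> posp Y" using mT .
          then have c2: "card (posp Y) \<ge> 2" using False fpY
            by (intro card2)
          then have "\<not> type11star k Y" using star_card(1)[of k Y] by auto
          then have "gg k Y \<ge> 1" using c2 nE cnX k by (intro gg_ge1) auto
          then show ?thesis using gI0 gU by simp
        qed
      next
        case nN: False
        have "negp Y \<subset> negp X" using nYX nN by auto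
        then have cn: "card (negp Y) < k - 1" using cnX fin_negp[OF X] by (metis psubset_card_mono)
        show ?thesis
        proof (cases "posp Y = {(i, True)}")
          case True
          have "gg k (X \<union> Y) = 0" using pU nU True pX ggX gg_cong[of "X \<union> Y" X k] by simp
          moreover have "\<not> type11star k Y" using star_card(2)[of k Y] cn by auto
          then have "gg k Y \<ge> 1" using cpY1 cn by (intro gg_ge1) auto
          ultimately show ?thesis using gI by simp
        next
          case False
          have "(i, True) \<in> posp Y" using mT .
          then have c2: "card (posp Y) \<ge> 2" using False fpY
            by (intro card2)
          have "gg k Y = 2" using c2 cn by (intro gg_2) auto
          then show ?thesis using gI gU by simp
        qed
      qed
    qed
  next
    case iTY: False
    have nmT: "(i, True) \<notin> posp Y" using iTY by (simp add: mem_posp)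
    have pI: "posp (X \<inter> Y) = {}" using pX nmT by (auto simp: posp_Int)
    have gI: "gg k (X \<inter> Y) = 0" using pI by (intro gg_p0) simp
    show ?thesis
    proof (cases "(i, False) \<in> Y")
      case iFY: True
      have mF: "(i, False) \<in> negp Y" using iFY by (simp add: mem_negp)
      have "negp (X \<union> Y) = Sm k" using nX nY mF iF by (auto simp: negp_Un)
      then have gU: "gg k (X \<union> Y) = 0" using k card_Sm by (intro gg_q0) auto
      then show ?thesis using gI gg_nonneg[of k Y] by simp
    next
      case iFY: False
      have "(i, False) \<notin> negp Y" using iFY by (simp add: mem_negp)
      then have nYX: "negp Y \<subseteq> negp X" using nY nX by auto
      have nU: "negp (X \<union> Y) = negp X" using nYX by (auto simp: negp_Un)
      have gU: "gg k (X \<union> Y) \<le> 1" using gg_le[of k "X \<union> Y"] nU cnX k by simp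
      have nsY: "\<not> type11star k Y"
      proof
        assume "type11star k Y"
        then obtain j where j: "j \<in> {1..k}" "posp Y = {(j, True)}" "negp Y = Sm k - {(j, False)}"
          by (auto simp: type11star_def)
        then have "j \<noteq> i" using nmT by auto
        then have "(i, False) \<in> negp Y" using j(3) iF by auto
        then show False using iFY by (simp add: mem_negp)
      qed
      have cn: "card (negp Y) < k" using nYX cnX fin_negp[OF X] k
      proof -
        have "card (negp Y) \<le> card (negp X)" using nYX fin_negp[OF X] by (rule card_mono[rotated])
        then show ?thesis using cnX k by linarith
      qed
      show ?thesis
      proof (cases "posp Y = {}")
        case True
        have "posp (X \<union> Y) = posp X" using True by (simp add: posp_Un)
        then have "gg k (X \<union> Y) = 0" using nU ggX gg_cong[of "X \<union> Y" X k] by simp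
        then show ?thesis using gI gg_nonneg[of k Y] by simp
      next
        case False
        then have "card (posp Y) \<ge> 1" using fpY by (simp add: Suc_le_eq card_gt_0_iff)
        then have "gg k Y \<ge> 1" using nsY cn by (intro gg_ge1) auto
        then show ?thesis using gI gU by simp
      qed
    qed
  qed
qed


lemma card_Un_Int_nat: "finite A \<Longrightarrow> finite B \<Longrightarrow> card (A \<inter> B) + card (A \<union> B) = card A + card B"
  using card_Un_Int[of A B] by simp

lemma gg_submod:
  assumes k: "k \<ge> 3" and X: "X \<subseteq> Spm k" and Y: "Y \<subseteq> Spm k"
  shows "gg k (X \<inter> Y) + gg k (X \<union> Y) \<le> gg k X + gg k Y"
proof (cases "type11star k X")
  case True
  then have "gg k X = 0" using star_card[OF True] star_k[OF True] by (simp add: gg_def)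
  then show ?thesis using star_case[OF k X Y True] by simp
next
  case nX: False
  show ?thesis
  proof (cases "type11star k Y")
    case True
    then have "gg k Y = 0" using star_card[OF True] star_k[OF True] by (simp add: gg_def)
    then show ?thesis using star_case[OF k Y X True] by (simp add: Int_commute Un_commute)
  next
    case nY: False
    have XY: "X \<union> Y \<subseteq> Spm k" using X Y by auto
    have a: "card (posp (X \<inter> Y)) + card (posp (X \<union> Y)) = card (posp X) + card (posp Y)"
      unfolding posp_Int posp_Un by (rule card_Un_Int_nat[OF fin_posp[OF X] fin_posp[OF Y]])
    have b: "card (negp (X \<inter> Y)) + card (negp (X \<union> Y)) = card (negp X) + card (negp Y)"
      unfolding negp_Int negp_Un by (rule card_Un_Int_nat[OF fin_negp[OF X] fin_negp[OF Y]])
    have c1: "card (posp (X \<inter> Y)) \<le> card (posp X)" "card (posp (X \<inter> Y)) \<le> card (posp Y)"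
      unfolding posp_Int using fin_posp[OF X] fin_posp[OF Y] by (auto intro!: card_mono)
    have c2: "card (negp (X \<inter> Y)) \<le> card (negp X)" "card (negp (X \<inter> Y)) \<le> card (negp Y)"
      unfolding negp_Int using fin_negp[OF X] fin_negp[OF Y] by (auto intro!: card_mono)
    have c3: "card (negp (X \<union> Y)) \<le> k" using card_negp_le[OF XY] .
    have "min (card (posp (X \<inter> Y))) (min (k - card (negp (X \<inter> Y))) 2) + min (card (posp (X \<union> Y))) (min (k - card (negp (X \<union> Y))) 2)
       \<le> min (card (posp X)) (min (k - card (negp X)) 2) + min (card (posp Y)) (min (k - card (negp Y)) 2)"
      by (rule F_sub[OF a c1 b c2 c3])
    then have "int (min (card (posp (X \<inter> Y))) (min (k - card (negp (X \<inter> Y))) 2)) + int (min (card (posp (X \<union> Y))) (min (k - card (negp (X \<union> Y))) 2))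
       \<le> int (min (card (posp X)) (min (k - card (negp X)) 2)) + int (min (card (posp Y)) (min (k - card (negp Y)) 2))"
      by linarith
    then show ?thesis using gg_le[of k "X \<inter> Y"] gg_le[of k "X \<union> Y"] gg_eq[OF nX] gg_eq[OF nY] by linarith
  qed
qed

lemma rho_submod: assumes k: "k \<ge> 3" and c: "c \<ge> 0" shows "submodular_on k (rho_c k c)"
  unfolding submodular_on_def
proof (intro conjI allI impI)
  show "rho_c k c {} = 0" using rho_c_gg[of "{}" k c] k gg_p0[of "{}" k] by (simp add: posp_def)
  fix X Y assume X: "X \<subseteq> Spm k" and Y: "Y \<subseteq> Spm k"
  have I: "X \<inter> Y \<subseteq> Spm k" and U: "X \<union> Y \<subseteq> Spm k" using X Y by auto
  have "real_of_int (gg k (X \<inter> Y)) + real_of_int (gg k (X \<union> Y)) \<le> real_of_int (gg k X) + real_of_int (gg k Y)"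
    using gg_submod[OF k X Y] by linarith
  then have "c * real_of_int (gg k (X \<inter> Y)) + c * real_of_int (gg k (X \<union> Y)) \<le> c * real_of_int (gg k X) + c * real_of_int (gg k Y)"
    using c by (metis distrib_left mult_left_mono)
  then show "rho_c k c (X \<inter> Y) + rho_c k c (X \<union> Y) \<le> rho_c k c X + rho_c k c Y"
    using rho_c_gg[OF X k] rho_c_gg[OF Y k] rho_c_gg[OF I k] rho_c_gg[OF U k] by simp
qed

definition flip :: "nat \<times> bool \<Rightarrow> nat \<times> bool" where "flip p = (fst p, \<not> snd p)"
lemma inj_flip: "inj flip" by (auto simp: inj_def flip_def prod_eq_iff)

lemma tred_sub: "tred X \<subseteq> X" by (auto simp: tred_def)

lemma tred_pos_bound: assumes X: "X \<subseteq> Spm k"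
  shows "card (posp (tred X)) + card (negp X) \<le> k"
proof -
  have "flip ` posp (tred X) \<subseteq> Sm k - negp X"
    using X by (auto simp: flip_def tred_def posp_def negp_def Sm_def Spm_def)
  then have "card (flip ` posp (tred X)) \<le> card (Sm k - negp X)"
    by (intro card_mono) (auto simp: fin_Sm)
  moreover have "card (flip ` posp (tred X)) = card (posp (tred X))"
    by (rule card_image[OF inj_on_subset[OF inj_flip subset_UNIV]])
  moreover have "card (Sm k - negp X) = k - card (negp X)"
    using negp_sub[OF X] fin_Sm card_Sm by (simp add: card_Diff_subset finite_subset)
  moreover have "card (negp X) \<le> k" using card_negp_le[OF X] .
  ultimately show ?thesis by linarith
qed

lemma tred_pair_bound: assumes X: "X \<subseteq> Spm k"
  shows "card (negp X) - card (negp (tred X)) \<le> card (posp X) - card (posp (tred X))"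
    "card (negp (tred X)) \<le> card (negp X)" "card (posp (tred X)) \<le> card (posp X)"
proof -
  have fp: "finite (posp X)" and fn: "finite (negp X)" using fin_posp[OF X] fin_negp[OF X] .
  have sp: "posp (tred X) \<subseteq> posp X" and sn: "negp (tred X) \<subseteq> negp X"
    by (auto simp: posp_def negp_def tred_def)
  have "negp X - negp (tred X) \<subseteq> flip ` (posp X - posp (tred X))"
  proof
    fix p assume p: "p \<in> negp X - negp (tred X)"
    then have "flip p \<in> posp X - posp (tred X)" "flip (flip p) = p"
      by (cases p; auto simp: flip_def negp_def posp_def tred_def)+
    then show "p \<in> flip ` (posp X - posp (tred X))" by (metis imageI)
  qed
  then have "card (negp X - negp (tred X)) \<le> card (flip ` (posp X - posp (tred X)))"
    by (intro card_mono) (use fp in auto)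
  also have "\<dots> = card (posp X - posp (tred X))"
    by (rule card_image[OF inj_on_subset[OF inj_flip subset_UNIV]])
  finally show "card (negp X) - card (negp (tred X)) \<le> card (posp X) - card (posp (tred X))"
    using sp sn fp fn by (simp add: card_Diff_subset finite_subset)
  show "card (negp (tred X)) \<le> card (negp X)" using sn fn by (rule card_mono[rotated])
  show "card (posp (tred X)) \<le> card (posp X)" using sp fp by (rule card_mono[rotated])
qed

lemma star_tred: assumes "type11star k X" shows "tred X = X"
proof -
  obtain i where pX: "posp X = {(i, True)}" and nX: "negp X = Sm k - {(i, False)}"
    using assms by (auto simp: type11star_def)
  have "(fst p, \<not> snd p) \<notin> X" if p: "p \<in> X" for p
  proof (cases "snd p")
    case True
    then have "p = (i, True)" using p pX by (auto simp: posp_def)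
    moreover have "(i, False) \<notin> negp X" using nX by simp
    ultimately show ?thesis by (simp add: negp_def)
  next
    case False
    then have "p \<in> Sm k - {(i, False)}" using p nX by (auto simp: negp_def)
    then have "fst p \<noteq> i" using False by (cases p) (auto simp: Sm_def)
    then have "(fst p, True) \<notin> posp X" using pX by simp
    then show ?thesis using False by (simp add: posp_def)
  qed
  then show ?thesis by (auto simp: tred_def)
qed

lemma min_mono_aux: "a \<le> p \<Longrightarrow> a \<le> q \<Longrightarrow> min a (min x (2::nat)) \<le> min p (min q 2)"
  by (simp add: min_def)

lemma rho_tmono: assumes k: "k \<ge> 3" and c: "c \<ge> 0" shows "tmonotone_on k (rho_c k c)"
  unfolding tmonotone_on_def
proof (intro allI impI)
  fix X assume X: "X \<subseteq> Spm k"
  have T: "tred X \<subseteq> Spm k" using X tred_sub by blast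
  have "gg k (tred X) \<le> gg k X"
  proof (cases "type11star k X")
    case True then show ?thesis by (simp add: star_tred)
  next
    case False
    have b1: "card (posp (tred X)) + card (negp X) \<le> k" using tred_pos_bound[OF X] .
    have b2: "card (posp (tred X)) \<le> card (posp X)" using tred_pair_bound(3)[OF X] .
    have "min (card (posp (tred X))) (min (k - card (negp (tred X))) 2) \<le> min (card (posp X)) (min (k - card (negp X)) 2)"
      using b1 b2 min_mono_aux[of "card (posp (tred X))" "card (posp X)" "k - card (negp X)" "k - card (negp (tred X))"] by linarith
    then show ?thesis using gg_le[of k "tred X"] gg_eq[OF False] by linarith
  qed
  then show "rho_c k c (tred X) \<le> rho_c k c X"
    using rho_c_gg[OF X k] rho_c_gg[OF T k] c by (simp add: mult_left_mono)
qed


lemma tm_arith: fixes p' p n n' k :: real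
  assumes "p' + n \<le> k" "n + p' \<le> p + n'" "p' \<le> p" "p' \<ge> 0" "n' \<ge> 0"
  shows "min p' 2 + min (k - 2 - n') 0 \<le> min p 2 + min (k - 2 - n) 0"
  using assms unfolding min_def by (smt (verit))
lemma conc1: fixes pI pU pX pY :: real
  assumes "pI + pU = pX + pY" "pI \<le> pX" "pI \<le> pY"
  shows "min pI 2 + min pU 2 \<le> min pX 2 + min pY 2"
  using assms unfolding min_def by (smt (verit))
lemma conc2: fixes nI nU nX nY K :: real
  assumes "nI + nU = nX + nY" "nI \<le> nX" "nI \<le> nY"
  shows "min (K - nI) 0 + min (K - nU) 0 \<le> min (K - nX) 0 + min (K - nY) 0"
  using assms unfolding min_def by (smt (verit))

definition hb :: "nat \<Rightarrow> (nat \<times> bool) set \<Rightarrow> real" where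
  "hb k X = min (real (card (posp X))) 2 + min (real k - 2 - real (card (negp X))) 0"

lemma rhobar_hb: "rhobar_c k c X = c * hb k X" by (simp add: rhobar_c_def hb_def)

lemma rhobar_submod: assumes k: "k \<ge> 3" and c: "c \<ge> 0" shows "submodular_on k (rhobar_c k c)"
  unfolding submodular_on_def
proof (intro conjI allI impI)
  have "hb k {} = 0" using k by (simp add: hb_def posp_def negp_def)
  then show "rhobar_c k c {} = 0" by (simp add: rhobar_hb)
  fix X Y assume X: "X \<subseteq> Spm k" and Y: "Y \<subseteq> Spm k"
  have a: "card (posp (X \<inter> Y)) + card (posp (X \<union> Y)) = card (posp X) + card (posp Y)"
    unfolding posp_Int posp_Un by (rule card_Un_Int_nat[OF fin_posp[OF X] fin_posp[OF Y]])
  have b: "card (negp (X \<inter> Y)) + card (negp (X \<union> Y)) = card (negp X) + card (negp Y)"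
    unfolding negp_Int negp_Un by (rule card_Un_Int_nat[OF fin_negp[OF X] fin_negp[OF Y]])
  have c1: "card (posp (X \<inter> Y)) \<le> card (posp X)" "card (posp (X \<inter> Y)) \<le> card (posp Y)"
    unfolding posp_Int using fin_posp[OF X] fin_posp[OF Y] by (auto intro!: card_mono)
  have c2: "card (negp (X \<inter> Y)) \<le> card (negp X)" "card (negp (X \<inter> Y)) \<le> card (negp Y)"
    unfolding negp_Int using fin_negp[OF X] fin_negp[OF Y] by (auto intro!: card_mono)
  have a': "real (card (posp (X \<inter> Y))) + real (card (posp (X \<union> Y))) = real (card (posp X)) + real (card (posp Y))"
    using a by (metis of_nat_add)
  have b': "real (card (negp (X \<inter> Y))) + real (card (negp (X \<union> Y))) = real (card (negp X)) + real (card (negp Y))"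
    using b by (metis of_nat_add)
  have A: "min (real (card (posp (X \<inter> Y)))) 2 + min (real (card (posp (X \<union> Y)))) 2
      \<le> min (real (card (posp X))) 2 + min (real (card (posp Y))) 2"
    by (rule conc1[OF a']) (use c1 in auto)
  have B: "min (real k - 2 - real (card (negp (X \<inter> Y)))) 0 + min (real k - 2 - real (card (negp (X \<union> Y)))) 0
      \<le> min (real k - 2 - real (card (negp X))) 0 + min (real k - 2 - real (card (negp Y))) 0"
    by (rule conc2[OF b']) (use c2 in auto)
  have "hb k (X \<inter> Y) + hb k (X \<union> Y) \<le> hb k X + hb k Y"
    using A B unfolding hb_def by linarith
  then have "c * hb k (X \<inter> Y) + c * hb k (X \<union> Y) \<le> c * hb k X + c * hb k Y"
    using c by (metis distrib_left mult_left_mono)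
  then show "rhobar_c k c (X \<inter> Y) + rhobar_c k c (X \<union> Y) \<le> rhobar_c k c X + rhobar_c k c Y"
    by (simp add: rhobar_hb)
qed

lemma rhobar_tmono: assumes k: "k \<ge> 3" and c: "c \<ge> 0" shows "tmonotone_on k (rhobar_c k c)"
  unfolding tmonotone_on_def
proof (intro allI impI)
  fix X assume X: "X \<subseteq> Spm k"
  have b1: "card (posp (tred X)) + card (negp X) \<le> k" using tred_pos_bound[OF X] .
  note b2 = tred_pair_bound[OF X]
  have n1: "card (negp X) + card (posp (tred X)) \<le> card (posp X) + card (negp (tred X))"
    using b2 by linarith
  have r1: "real (card (posp (tred X))) + real (card (negp X)) \<le> real k" using b1 by linarith
  have r2: "real (card (negp X)) + real (card (posp (tred X))) \<le> real (card (posp X)) + real (card (negp (tred X)))"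
    using n1 by linarith
  have r3: "real (card (posp (tred X))) \<le> real (card (posp X))" using b2 by simp
  have "hb k (tred X) \<le> hb k X" unfolding hb_def
    by (rule tm_arith[OF r1 r2 r3]) auto
  then show "rhobar_c k c (tred X) \<le> rhobar_c k c X"
    unfolding rhobar_hb using c by (rule mult_left_mono)
qed


lemma sum_split: "X \<subseteq> Spm k \<Longrightarrow> sum x X = sum x (posp X) + sum x (negp X)"
proof -
  assume X: "X \<subseteq> Spm k"
  have "sum x (posp X \<union> negp X) = sum x (posp X) + sum x (negp X)"
    by (rule sum.union_disjoint) (use fin_posp[OF X] fin_negp[OF X] X_split(2) in auto)
  then show ?thesis using X_split(1)[of X] by simp
qed

lemma sum_Spm: "sum x (Spm k) = sum x (Sp k) + sum x (Sm k)"
  unfolding Sp_Sm(1) by (rule sum.union_disjoint) (use fin_Sp fin_Sm Sp_Sm(2) in auto)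

lemma Bc_bounds: assumes "x \<in> B_c k c"
  shows "p \<in> Sp k \<Longrightarrow> 0 \<le> x p \<and> x p \<le> c" "p \<in> Sm k \<Longrightarrow> - c \<le> x p \<and> x p \<le> 0"
  using assms by (auto simp: B_c_def Sp_def Sm_def)

lemma Bc_sums: assumes x: "x \<in> B_c k c" and X: "X \<subseteq> Spm k"
  shows "sum x (posp X) \<le> c * real (card (posp X))"
    "sum x (posp X) \<le> sum x (Sp k)"
    "sum x (negp X) \<le> 0"
    "sum x (negp X) = sum x (Sm k) - sum x (Sm k - negp X)"
    "- sum x (Sm k - negp X) \<le> c * real (k - card (negp X))"
    "sum x (Sm k) \<le> sum x (Sm k - negp X)"
proof -
  note B = Bc_bounds[OF x]
  have ps: "posp X \<subseteq> Sp k" and ns: "negp X \<subseteq> Sm k" using posp_sub[OF X] negp_sub[OF X] .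
  show "sum x (posp X) \<le> c * real (card (posp X))"
    using sum_bounded_above[of "posp X" x c] B(1) ps by (auto simp: mult.commute)
  show "sum x (posp X) \<le> sum x (Sp k)"
    by (rule sum_mono2[OF fin_Sp ps]) (use B(1) in auto)
  show n0: "sum x (negp X) \<le> 0" by (rule sum_nonpos) (use B(2) ns in auto)
  show d: "sum x (negp X) = sum x (Sm k) - sum x (Sm k - negp X)"
    using sum_diff[OF fin_Sm ns, of x] by simp
  have "sum (\<lambda>p. - x p) (Sm k - negp X) \<le> of_nat (card (Sm k - negp X)) * c"
  proof (rule sum_bounded_above)
    fix p assume "p \<in> Sm k - negp X"
    then have "- c \<le> x p" using B(2) by blast
    then show "- x p \<le> c" by linarith
  qed
  moreover have "card (Sm k - negp X) = k - card (negp X)"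
    using ns by (simp add: card_Diff_subset finite_subset fin_Sm card_Sm)
  ultimately show "- sum x (Sm k - negp X) \<le> c * real (k - card (negp X))"
    by (simp add: sum_negf mult.commute)
  show "sum x (Sm k) \<le> sum x (Sm k - negp X)" using d n0 by linarith
qed

lemma min3_cases: "min a (min b (2::nat)) = a \<or> min a (min b 2) = b \<or> min a (min b 2) = 2"
  by (auto simp: min_def)

lemma Bc_in_poly: assumes k: "k \<ge> 3" and c: "c \<ge> 0" and x: "x \<in> B_c k c" and X: "X \<subseteq> Spm k"
  shows "sum x X \<le> rho_c k c X"
proof -
  have xs: "sum x (Spm k) = 0" "sum x (Sp k) \<le> 2 * c" using x by (auto simp: B_c_def)
  note S = Bc_sums[OF x X]
  note sp = sum_split[OF X, of x]
  show ?thesis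
  proof (cases "type11star k X")
    case True
    then obtain i where i: "i \<in> {1..k}" and pX: "posp X = {(i, True)}" and nX: "negp X = Sm k - {(i, False)}"
      by (auto simp: type11star_def)
    have "gg k X = 0" using True star_card[OF True] star_k[OF True] by (simp add: gg_def)
    moreover have "sum x X \<le> 0" using sp pX nX x i by (auto simp: B_c_def)
    ultimately show ?thesis using rho_c_gg[OF X k] by simp
  next
    case False
    have g: "rho_c k c X = c * real (min (card (posp X)) (min (k - card (negp X)) 2))"
      using rho_c_gg[OF X k] gg_eq[OF False] by simp
    have a1: "sum x X \<le> c * real (card (posp X))" using sp S by linarith
    have a2: "sum x X \<le> c * 2" using sp S xs by linarith
    have a3: "sum x X \<le> c * real (k - card (negp X))" using sp S xs sum_Spm[of x k] by linarith
    show ?thesis unfolding g using min3_cases[of "card (posp X)" "k - card (negp X)"] a1 a2 a3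
      by auto
  qed
qed


lemma Bbar_in_poly: assumes k: "k \<ge> 3" and c: "c \<ge> 0" and x: "x \<in> B_c k c"
  and xm: "sum x (Sm k) \<le> - 2 * c" and X: "X \<subseteq> Spm k"
  shows "sum x X \<le> rhobar_c k c X"
proof -
  have xs: "sum x (Spm k) = 0" "sum x (Sp k) \<le> 2 * c" using x by (auto simp: B_c_def)
  note S = Bc_sums[OF x X]
  note sp = sum_split[OF X, of x]
  have e1: "sum x (Sp k) = 2 * c" "sum x (Sm k) = - 2 * c" using xs xm sum_Spm[of x k] by linarith+
  have nk: "card (negp X) \<le> k" using card_negp_le[OF X] .
  have rk: "real (k - card (negp X)) = real k - real (card (negp X))" using nk by (simp add: of_nat_diff)
  have P: "sum x (posp X) \<le> c * min (real (card (posp X))) 2"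
    using S(1) S(2) e1 by (cases "real (card (posp X)) \<le> 2") (auto simp: min_def)
  have N: "sum x (negp X) \<le> c * min (real k - 2 - real (card (negp X))) 0"
  proof -
    have "sum x (negp X) \<le> - 2 * c + c * real (k - card (negp X))" using S(4) S(5) e1 by linarith
    moreover have "sum x (negp X) \<le> 0" using S(3) .
    ultimately show ?thesis using rk
      by (cases "real k - 2 - real (card (negp X)) \<le> 0") (auto simp: min_def algebra_simps)
  qed
  show ?thesis using sp P N by (simp add: rhobar_c_def distrib_left)
qed

definition sset :: "nat \<Rightarrow> nat \<Rightarrow> (nat \<times> bool) set" where
  "sset k i = insert (i, True) (Sm k - {(i, False)})"

lemma Bc_intro:
  assumes van: "\<forall>p. p \<notin> Spm k \<longrightarrow> x p = 0" and s0: "sum x (Spm k) = 0" and sp: "sum x (Sp k) \<le> 2 * c"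
    and h: "\<And>i. i \<in> {1..k} \<Longrightarrow> sum x (sset k i) \<le> 0 \<and> sum x {(i, True)} \<le> c \<and> sum x (Spm k - {(i, True)}) \<le> 0
        \<and> sum x {(i, False)} \<le> 0 \<and> sum x (Spm k - {(i, False)}) \<le> c"
  shows "x \<in> B_c k c"
proof -
  have "x (i, True) + sum x (Sm k - {(i, False)}) \<le> 0 \<and> 0 \<le> x (i, True) \<and> x (i, True) \<le> c
     \<and> - c \<le> x (i, False) \<and> x (i, False) \<le> 0" if i: "i \<in> {1..k}" for i
  proof -
    have inT: "(i, True) \<in> Spm k" "(i, False) \<in> Spm k" "(i, True) \<notin> Sm k - {(i, False)}"
      using i by (auto simp: Spm_def Sm_def)
    have "sum x (sset k i) = x (i, True) + sum x (Sm k - {(i, False)})"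
      unfolding sset_def by (rule sum.insert) (use fin_Sm inT in auto)
    moreover have "sum x (Spm k - {(i, True)}) = - x (i, True)" "sum x (Spm k - {(i, False)}) = - x (i, False)"
      using sum_diff1[OF fin_Spm, of x] inT s0 by auto
    ultimately show ?thesis using h[OF i] by auto
  qed
  then show ?thesis using van s0 sp by (auto simp: B_c_def)
qed

lemma sets_pn0:
  shows "posp (Spm k) = Sp k" "negp (Spm k) = Sm k"
    "posp (Sp k) = Sp k" "negp (Sp k) = {}"
    "posp (Sm k) = {}" "negp (Sm k) = Sm k"
  by (auto simp: posp_def negp_def Spm_def Sp_def Sm_def)

lemma sets_pn: assumes i: "i \<in> {1..k}"
  shows "posp (sset k i) = {(i, True)}" "negp (sset k i) = Sm k - {(i, False)}"
    "posp {(i, True)} = {(i, True)}" "negp {(i, True)} = {}"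
    "posp {(i, False)} = {}" "negp {(i, False)} = {(i, False)}"
    "posp (Spm k - {(i, True)}) = Sp k - {(i, True)}" "negp (Spm k - {(i, True)}) = Sm k"
    "posp (Spm k - {(i, False)}) = Sp k" "negp (Spm k - {(i, False)}) = Sm k - {(i, False)}"
  using i by (auto simp: posp_def negp_def Spm_def Sp_def Sm_def sset_def)

lemma sets_sub: assumes i: "i \<in> {1..k}"
  shows "sset k i \<subseteq> Spm k" "{(i, True)} \<subseteq> Spm k" "{(i, False)} \<subseteq> Spm k"
    "Spm k - {(i, True)} \<subseteq> Spm k" "Spm k - {(i, False)} \<subseteq> Spm k"
  using i by (auto simp: Spm_def Sp_def Sm_def sset_def)

lemma sets_sub0: "Sp k \<subseteq> Spm k" "Sm k \<subseteq> Spm k" "Spm k \<subseteq> Spm k"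
  by (auto simp: Spm_def Sp_def Sm_def)

lemma card_Sp_minus: "i \<in> {1..k} \<Longrightarrow> card (Sp k - {(i, True)}) = k - 1"
  by (simp add: card_Sp Sp_def)

lemma sset_star: "i \<in> {1..k} \<Longrightarrow> type11star k (sset k i)"
  using sets_pn(1,2) by (auto simp: type11star_def)

lemma poly_in_Bc: assumes k: "k \<ge> 3" and c: "c \<ge> 0" and x: "x \<in> Bpoly k (rho_c k c)"
  shows "x \<in> B_c k c"
proof -
  have van: "\<forall>p. p \<notin> Spm k \<longrightarrow> x p = 0" and s0: "sum x (Spm k) = rho_c k c (Spm k)"
    and le: "\<And>X. X \<subseteq> Spm k \<Longrightarrow> sum x X \<le> c * gg k X"
    using x rho_c_gg[OF _ k] by (auto simp: Bpoly_def)
  have k1: "k \<ge> 1" using k by simp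
  have le1: "sum x X \<le> c" if "X \<subseteq> Spm k" "gg k X \<le> 1" for X
  proof -
    have "c * gg k X \<le> c * 1" using that(2) c by (intro mult_left_mono) auto
    then show ?thesis using le[OF that(1)] by simp
  qed
  have g0: "gg k (Spm k) = 0" by (rule gg_q0[OF k1]) (simp add: sets_pn0 card_Sm)
  have gSp: "gg k (Sp k) = 2" by (rule gg_2) (use k in \<open>simp_all add: sets_pn0 card_Sp\<close>)
  show ?thesis
  proof (rule Bc_intro[OF van])
    show "sum x (Spm k) = 0" using s0 g0 rho_c_gg[OF sets_sub0(3) k] by simp
    show "sum x (Sp k) \<le> 2 * c" using le[OF sets_sub0(1)] gSp by simp
    fix i assume i: "i \<in> {1..k}"
    note pn = sets_pn[OF i] and sb = sets_sub[OF i]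
    have "gg k (sset k i) = 0" using sset_star[OF i] star_card[OF sset_star[OF i]] k1 by (simp add: gg_def)
    then have 1: "sum x (sset k i) \<le> 0" using le[OF sb(1)] by simp
    have "gg k {(i, True)} \<le> 1" using gg_le[of k "{(i, True)}"] pn by simp
    then have 2: "sum x {(i, True)} \<le> c" using le1 sb by blast
    have "gg k (Spm k - {(i, True)}) = 0" by (rule gg_q0[OF k1]) (simp add: pn card_Sm)
    then have 3: "sum x (Spm k - {(i, True)}) \<le> 0" using le[OF sb(4)] by simp
    have "gg k {(i, False)} = 0" by (rule gg_p0) (simp add: pn)
    then have 4: "sum x {(i, False)} \<le> 0" using le[OF sb(3)] by simp
    have "gg k (Spm k - {(i, False)}) \<le> 1" using gg_le[of k "Spm k - {(i, False)}"] pn card_Sm_minus[OF i] k by simp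
    then have 5: "sum x (Spm k - {(i, False)}) \<le> c" using le1 sb by blast
    show "sum x (sset k i) \<le> 0 \<and> sum x {(i, True)} \<le> c \<and> sum x (Spm k - {(i, True)}) \<le> 0
        \<and> sum x {(i, False)} \<le> 0 \<and> sum x (Spm k - {(i, False)}) \<le> c" using 1 2 3 4 5 by simp
  qed
qed


lemma hb_Spm: "k \<ge> 3 \<Longrightarrow> hb k (Spm k) = 0"
  by (simp add: hb_def sets_pn0 card_Sm card_Sp min_def)

lemma poly_in_Bbar: assumes k: "k \<ge> 3" and c: "c \<ge> 0" and x: "x \<in> Bpoly k (rhobar_c k c)"
  shows "x \<in> Bbar_c k c"
proof -
  have van: "\<forall>p. p \<notin> Spm k \<longrightarrow> x p = 0" and s0: "sum x (Spm k) = c * hb k (Spm k)"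
    and le: "\<And>X. X \<subseteq> Spm k \<Longrightarrow> sum x X \<le> c * hb k X"
    using x by (auto simp: Bpoly_def rhobar_hb)
  have k1: "k \<ge> 1" using k by simp
  have rk: "real (k - 1) = real k - 1" using k1 by (simp add: of_nat_diff)
  have hSp: "hb k (Sp k) = 2" using k by (simp add: hb_def sets_pn0 card_Sm card_Sp min_def)
  have hSm: "hb k (Sm k) = -2" using k by (simp add: hb_def sets_pn0 card_Sm card_Sp min_def)
  have inB: "x \<in> B_c k c"
  proof (rule Bc_intro[OF van])
    show "sum x (Spm k) = 0" using s0 hb_Spm[OF k] by simp
    show "sum x (Sp k) \<le> 2 * c" using le[OF sets_sub0(1)] hSp by simp
    fix i assume i: "i \<in> {1..k}"
    note pn = sets_pn[OF i] and sb = sets_sub[OF i]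
    have "hb k (sset k i) = 0" using k rk by (simp add: hb_def pn card_Sm_minus[OF i] min_def)
    then have 1: "sum x (sset k i) \<le> 0" using le[OF sb(1)] by simp
    have "hb k {(i, True)} = 1" using k by (simp add: hb_def pn min_def)
    then have 2: "sum x {(i, True)} \<le> c" using le[OF sb(2)] by simp
    have "hb k (Spm k - {(i, True)}) = 0" using k rk by (simp add: hb_def pn card_Sp_minus[OF i] card_Sm min_def)
    then have 3: "sum x (Spm k - {(i, True)}) \<le> 0" using le[OF sb(4)] by simp
    have "hb k {(i, False)} = 0" using k by (simp add: hb_def pn min_def)
    then have 4: "sum x {(i, False)} \<le> 0" using le[OF sb(3)] by simp
    have "hb k (Spm k - {(i, False)}) = 1" using k rk by (simp add: hb_def pn card_Sp card_Sm_minus[OF i] min_def)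
    then have 5: "sum x (Spm k - {(i, False)}) \<le> c" using le[OF sb(5)] by simp
    show "sum x (sset k i) \<le> 0 \<and> sum x {(i, True)} \<le> c \<and> sum x (Spm k - {(i, True)}) \<le> 0
        \<and> sum x {(i, False)} \<le> 0 \<and> sum x (Spm k - {(i, False)}) \<le> c" using 1 2 3 4 5 by simp
  qed
  have "sum x (Sm k) \<le> - 2 * c" using le[OF sets_sub0(2)] hSm by simp
  then show ?thesis using inB by (simp add: Bbar_c_def)
qed

theorem lemma4p2:
  fixes k :: nat and c :: real
  assumes "k \<ge> 3" and "c \<ge> 0"
  shows "submodular_on k (rho_c k c) \<and> tmonotone_on k (rho_c k c) \<and>
         submodular_on k (rhobar_c k c) \<and> tmonotone_on k (rhobar_c k c) \<and>
         B_c k c = Bpoly k (rho_c k c) \<and> Bbar_c k c = Bpoly k (rhobar_c k c)"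
proof (intro conjI)
  note k = assms(1) and c = assms(2)
  show "submodular_on k (rho_c k c)" using rho_submod[OF k c] .
  show "tmonotone_on k (rho_c k c)" using rho_tmono[OF k c] .
  show "submodular_on k (rhobar_c k c)" using rhobar_submod[OF k c] .
  show "tmonotone_on k (rhobar_c k c)" using rhobar_tmono[OF k c] .
  have k1: "k \<ge> 1" using k by simp
  have g0: "gg k (Spm k) = 0" by (rule gg_q0[OF k1]) (simp add: sets_pn0 card_Sm)
  show "B_c k c = Bpoly k (rho_c k c)"
  proof
    show "B_c k c \<subseteq> Bpoly k (rho_c k c)"
    proof
      fix x assume x: "x \<in> B_c k c"
      have "rho_c k c (Spm k) = 0" using rho_c_gg[OF sets_sub0(3) k] g0 by simp
      then show "x \<in> Bpoly k (rho_c k c)" using x Bc_in_poly[OF k c x]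
        by (auto simp: Bpoly_def B_c_def)
    qed
    show "Bpoly k (rho_c k c) \<subseteq> B_c k c" using poly_in_Bc[OF k c] by blast
  qed
  show "Bbar_c k c = Bpoly k (rhobar_c k c)"
  proof
    show "Bbar_c k c \<subseteq> Bpoly k (rhobar_c k c)"
    proof
      fix x assume x: "x \<in> Bbar_c k c"
      then have xB: "x \<in> B_c k c" and xm: "sum x (Sm k) \<le> - 2 * c" by (auto simp: Bbar_c_def)
      have "rhobar_c k c (Spm k) = 0" using hb_Spm[OF k] by (simp add: rhobar_hb)
      then show "x \<in> Bpoly k (rhobar_c k c)" using xB Bbar_in_poly[OF k c xB xm]
        by (auto simp: Bpoly_def B_c_def)
    qed
    show "Bpoly k (rhobar_c k c) \<subseteq> Bbar_c k c" using poly_in_Bbar[OF k c] by blast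
  qed
qed

end
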